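(* For integer $n\ge1$ and real $1\le x\le n$ define $$A_0(n,x)=n^2\left[\left(\tfrac32-\gamma\right)+\left(H_{\lfloor n/x\rfloor}-\log\frac nx\right)+\frac12\frac{x^2}{n^2}\left\lfloor\frac nx\right\rfloor^2+\frac12\frac{x^2}{n^2}\left\lfloor\frac nx\right\rfloor-2\frac xn\left\lfloor\frac nx\right\rfloor\right]$$ and $$B_0(n,x)=n^2\left[(1-\gamma)+\left(H_{\lfloor n/x\rfloor}-\log\frac nx\right)-\left\lfloor\frac nx\right\rfloor\frac xn\right].$$ Then, uniformly for $n\ge1$ and $1\le x\le n$: (1) $A_0(n,x)=nx+O(x^2)$; (2) $B_0(n,x)=\frac12 nx+O(x^2)$.
   Context: $H_m=\sum_{k=1}^m\frac1k$ and $\gamma$ is Euler's constant. *)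

theory Defs
  imports "HOL-Analysis.Analysis"
begin

definition A0 :: "nat \<Rightarrow> real \<Rightarrow> real" where
  "A0 n x = (let m = nat \<lfloor>real n / x\<rfloor> in
     (real n)^2 * ((3/2 - euler_mascheroni) + (harm m - ln (real n / x))
       + 1/2 * x^2 / (real n)^2 * (real m)^2 + 1/2 * x^2 / (real n)^2 * real m
       - 2 * x / real n * real m))"

definition B0 :: "nat \<Rightarrow> real \<Rightarrow> real" where
  "B0 n x = (let m = nat \<lfloor>real n / x\<rfloor> in
     (real n)^2 * ((1 - euler_mascheroni) + (harm m - ln (real n / x))
       - real m * x / real n))"

end

theory Submission
  imports Defs
begin

lemma key_facts:
  fixes t :: real
  assumes t: "t \<ge> 1"
  defines "m \<equiv> nat \<lfloor>t\<rfloor>"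
  shows "real m \<ge> 1" "real m \<le> t" "t < real m + 1"
    and "0 \<le> harm m - euler_mascheroni - ln (real m + 1) + 1/(2*real m)"
    and "harm m - euler_mascheroni - ln (real m + 1) + 1/(2*real m) \<le> 1/(2*real m*(real m+1))"
    and "0 \<le> (real m + 1)/t - 1 - (ln (real m + 1) - ln t)"
    and "(real m + 1)/t - 1 - (ln (real m + 1) - ln t) \<le> 1/t^2"
proof -
  have fl: "real_of_int \<lfloor>t\<rfloor> \<le> t" "t < real_of_int \<lfloor>t\<rfloor> + 1" by linarith+
  have fl1: "\<lfloor>t\<rfloor> \<ge> 1" using t by linarith
  have mm: "real m = real_of_int \<lfloor>t\<rfloor>" unfolding m_def using fl1 by simp
  show m1: "real m \<ge> 1" "real m \<le> t" "t < real m + 1" using mm fl fl1 by auto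
  have "m \<ge> 1" using m1 by simp
  from euler_mascheroni_bounds[OF this]
  have b: "harm m - ln (real (Suc m)) + inverse (real (2*(m+1))) \<le> euler_mascheroni"
          "euler_mascheroni \<le> harm m - ln (real (Suc m)) + inverse (real (2*m))" by auto
  have e1: "inverse (real (2*(m+1))) = 1/(2*real m) - 1/(2*real m*(real m+1))"
  proof -
    have p: "real m > 0" "real m + 1 > 0" "2*real m*(real m+1) \<noteq> 0" using m1 by auto
    have "inverse (real (2*(m+1))) = 1/(2*(real m+1))" by (simp add: inverse_eq_divide algebra_simps)
    also have "\<dots> = 1/(2*real m) - 1/(2*real m*(real m+1))"
    proof -
      have "1/(2*real m) = (real m + 1)/(2*real m*(real m+1))" using p by simp
      moreover have "(real m + 1)/(2*real m*(real m+1)) - 1/(2*real m*(real m+1)) = real m/(2*real m*(real m+1))"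
        by (metis add_diff_cancel_right' diff_divide_distrib)
      ultimately have "1/(2*real m) - 1/(2*real m*(real m+1)) = real m/(2*real m*(real m+1))"
        by simp
      also have "\<dots> = 1/(2*(real m+1))" using p by simp
      finally show ?thesis by simp
    qed
    finally show ?thesis .
  qed
  show "0 \<le> harm m - euler_mascheroni - ln (real m + 1) + 1/(2*real m)"
    using b(2) by (simp add: inverse_eq_divide add.commute)
  show "harm m - euler_mascheroni - ln (real m + 1) + 1/(2*real m) \<le> 1/(2*real m*(real m+1))"
    using b(1) e1 by (simp add: add.commute)
  have tp: "t > 0" using t by simp
  have "ln ((real m + 1)/t) \<le> (real m + 1)/t - 1"
    by (rule ln_le_minus_one) (use tp m1 in simp)
  then show "0 \<le> (real m + 1)/t - 1 - (ln (real m + 1) - ln t)"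
    using tp m1 by (simp add: ln_div)
  define d where "d = real m + 1 - t"
  have d: "0 < d" "d \<le> 1" using m1 unfolding d_def by auto
  have lg: "ln (real m + 1) - ln t \<ge> 2 * (real m + 1 - t) / (t + (real m + 1))"
    by (rule ln_inverse_approx_ge) (use tp m1 in auto)
  have "(real m + 1)/t - 1 - 2 * (real m + 1 - t) / (t + (real m + 1)) = d^2/(t*(2*t+d))"
    using tp d unfolding d_def by (simp add: field_simps power2_eq_square)
  also have "\<dots> \<le> 1/t^2"
  proof -
    have "d^2 \<le> 1" using d by (simp add: power_le_one)
    have "t^2 \<le> t*(2*t+d)" using tp d by (simp add: power2_eq_square field_simps)
    have pos: "0 < t*(2*t+d)" "0 < t^2" using tp d by auto
    have "d^2/(t*(2*t+d)) \<le> 1/(t*(2*t+d))"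
      using \<open>d^2 \<le> 1\<close> pos by (intro divide_right_mono) auto
    also have "\<dots> \<le> 1/t^2"
      using \<open>t^2 \<le> t*(2*t+d)\<close> pos mult_pos_pos[OF pos] by (intro divide_left_mono) auto
    finally show ?thesis .
  qed
  finally show "(real m + 1)/t - 1 - (ln (real m + 1) - ln t) \<le> 1/t^2" using lg by linarith
qed

lemma g_bounds:
  fixes t :: real
  assumes t: "t \<ge> 1"
  defines "m \<equiv> nat \<lfloor>t\<rfloor>"
  shows "\<bar>3/2 - euler_mascheroni + (harm m - ln t) + 1/2 * (1/t)^2 * (real m)^2
           + 1/2 * (1/t)^2 * real m - 2 * (1/t) * real m - 1/t\<bar> \<le> 3 * (1/t)^2"
    and "\<bar>1 - euler_mascheroni + (harm m - ln t) - real m * (1/t) - 1/2 * (1/t)\<bar> \<le> 3 * (1/t)^2"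
proof -
  note kf = key_facts[OF t, folded m_def]
  define \<delta> where "\<delta> = harm m - euler_mascheroni - ln (real m + 1) + 1/(2*real m)"
  define \<epsilon> where "\<epsilon> = (real m + 1)/t - 1 - (ln (real m + 1) - ln t)"
  define s where "s = t - real m"
  have s: "0 \<le> s" "s < 1" using kf unfolding s_def by auto
  have tp: "t > 0" using t by simp
  have mp: "real m > 0" using kf by simp
  have e: "harm m - euler_mascheroni - ln t = \<delta> - 1/(2*real m) + (real m + 1)/t - 1 - \<epsilon>"
    unfolding \<delta>_def \<epsilon>_def by simp
  have d1: "0 \<le> \<delta>" "\<delta> \<le> 1/(2*real m*(real m+1))" using kf unfolding \<delta>_def by auto
  have "t^2 \<le> 2*real m*(real m+1)"
  proof -
    have "t * t \<le> (2*real m)*(real m+1)" using kf tp by (intro mult_mono) auto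
    then show ?thesis by (simp add: power2_eq_square mult.assoc)
  qed
  then have "1/(2*real m*(real m+1)) \<le> 1/t^2" using tp mp
    by (intro divide_left_mono) auto
  then have d2: "\<delta> \<le> (1/t)^2" using d1 by (simp add: power_divide)
  have ep: "0 \<le> \<epsilon>" "\<epsilon> \<le> (1/t)^2" using kf unfolding \<epsilon>_def by (auto simp: power_divide)
  have F1: "1/(2*t) - 1/(2*real m) = - s/(2*t*real m)"
    using tp mp unfolding s_def by (simp add: field_simps)
  have "t \<le> 2 * real m" using kf by linarith
  then have "t * t \<le> 2 * t * real m" using tp by simp
  then have "1/(2*t*real m) \<le> 1/(t*t)" using tp mp
    by (intro divide_left_mono) auto
  then have F2: "s/(2*t*real m) \<le> (1/t)^2" using s tp mp
  proof -
    have "s * (1/(2*t*real m)) \<le> 1 * (1/(t*t))"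
      using s tp mp \<open>1/(2*t*real m) \<le> 1/(t*t)\<close> by (intro mult_mono) auto
    then show ?thesis by (simp add: power2_eq_square)
  qed
  have F2': "0 \<le> s/(2*t*real m)" using s tp mp by simp
  have sq: "0 \<le> s - s^2" "s - s^2 \<le> 1/4"
  proof -
    have "s * s \<le> 1 * s" using s by (intro mult_right_mono) auto
    then show "0 \<le> s - s^2" by (simp add: power2_eq_square)
    have "0 \<le> (s - 1/2)^2" by simp
    then show "s - s^2 \<le> 1/4" by (simp add: power2_eq_square algebra_simps)
  qed
  show "\<bar>3/2 - euler_mascheroni + (harm m - ln t) + 1/2 * (1/t)^2 * (real m)^2
           + 1/2 * (1/t)^2 * real m - 2 * (1/t) * real m - 1/t\<bar> \<le> 3 * (1/t)^2"
  proof -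
    have eq: "3/2 - euler_mascheroni + (harm m - ln t) + 1/2 * (1/t)^2 * (real m)^2
           + 1/2 * (1/t)^2 * real m - 2 * (1/t) * real m - 1/t
           = \<delta> - \<epsilon> - s/(2*t*real m) - (s - s^2)/2 * (1/t)^2"
    proof -
      have "3/2 - euler_mascheroni + (harm m - ln t) + 1/2 * (1/t)^2 * (real m)^2
           + 1/2 * (1/t)^2 * real m - 2 * (1/t) * real m - 1/t
           = \<delta> - \<epsilon> + (3/2 - 1/(2*real m) + (real m + 1)/t - 1 + 1/2 * (1/t)^2 * (real m)^2
           + 1/2 * (1/t)^2 * real m - 2 * (1/t) * real m - 1/t)" using e by simp
      also have "3/2 - 1/(2*real m) + (real m + 1)/t - 1 + 1/2 * (1/t)^2 * (real m)^2
           + 1/2 * (1/t)^2 * real m - 2 * (1/t) * real m - 1/t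
           = (1/(2*t) - 1/(2*real m)) - (s - s^2)/2 * (1/t)^2"
        using tp mp unfolding s_def by (simp add: field_simps power2_eq_square)
      finally show ?thesis using F1 by simp
    qed
    have "0 \<le> (s - s^2)/2 * (1/t)^2" "(s - s^2)/2 * (1/t)^2 \<le> (1/t)^2"
    proof -
      show "0 \<le> (s - s^2)/2 * (1/t)^2" using sq by simp
      have "(s - s^2)/2 * (1/t)^2 \<le> 1 * (1/t)^2"
        using sq by (intro mult_right_mono) auto
      then show "(s - s^2)/2 * (1/t)^2 \<le> (1/t)^2" by simp
    qed
    then show ?thesis unfolding eq using d1 d2 ep F2 F2' by linarith
  qed
  show "\<bar>1 - euler_mascheroni + (harm m - ln t) - real m * (1/t) - 1/2 * (1/t)\<bar> \<le> 3 * (1/t)^2"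
  proof -
    have eq: "1 - euler_mascheroni + (harm m - ln t) - real m * (1/t) - 1/2 * (1/t)
           = \<delta> - \<epsilon> - s/(2*t*real m)"
    proof -
      have "1 - euler_mascheroni + (harm m - ln t) - real m * (1/t) - 1/2 * (1/t)
           = \<delta> - \<epsilon> + (1 - 1/(2*real m) + (real m + 1)/t - 1 - real m * (1/t) - 1/2 * (1/t))"
        using e by simp
      also have "1 - 1/(2*real m) + (real m + 1)/t - 1 - real m * (1/t) - 1/2 * (1/t)
           = 1/(2*t) - 1/(2*real m)"
        using tp mp by (simp add: field_simps)
      finally show ?thesis using F1 by simp
    qed
    show ?thesis unfolding eq using d1 d2 ep F2 F2' by linarith
  qed
qed

theorem theorem3p7:
  shows "(\<exists>C. \<forall>n::nat. \<forall>x::real. 1 \<le> n \<and> 1 \<le> x \<and> x \<le> real n \<longrightarrow>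
            \<bar>A0 n x - real n * x\<bar> \<le> C * x^2)
       \<and> (\<exists>C. \<forall>n::nat. \<forall>x::real. 1 \<le> n \<and> 1 \<le> x \<and> x \<le> real n \<longrightarrow>
            \<bar>B0 n x - 1/2 * real n * x\<bar> \<le> C * x^2)"
proof (intro conjI exI allI impI)
  fix n :: nat and x :: real
  assume a: "1 \<le> n \<and> 1 \<le> x \<and> x \<le> real n"
  define t where "t = real n / x"
  have np: "real n > 0" and xp: "x > 0" using a by auto
  have t1: "t \<ge> 1" unfolding t_def using a xp by simp
  have it: "1/t = x / real n" unfolding t_def by simp
  have it2: "x^2 / (real n)^2 = (1/t)^2" unfolding it by (simp add: power_divide)
  note g = g_bounds[OF t1]
  have nn: "(real n)^2 * (1/t)^2 = x^2" unfolding it using np by (simp add: power_divide)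
  have "A0 n x - real n * x = (real n)^2 * (3/2 - euler_mascheroni + (harm (nat \<lfloor>t\<rfloor>) - ln t)
      + 1/2 * (1/t)^2 * (real (nat \<lfloor>t\<rfloor>))^2
      + 1/2 * (1/t)^2 * real (nat \<lfloor>t\<rfloor>) - 2 * (1/t) * real (nat \<lfloor>t\<rfloor>) - 1/t)"
    unfolding A0_def Let_def t_def[symmetric] using np xp
    by (simp add: it it2[symmetric] field_simps power2_eq_square)
  also have "\<bar>\<dots>\<bar> \<le> (real n)^2 * (3 * (1/t)^2)"
    using g(1) by (simp add: abs_mult mult_left_mono)
  also have "\<dots> = 3 * x^2" using nn by simp
  finally show "\<bar>A0 n x - real n * x\<bar> \<le> 3 * x^2" .
next
  fix n :: nat and x :: real
  assume a: "1 \<le> n \<and> 1 \<le> x \<and> x \<le> real n"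
  define t where "t = real n / x"
  have np: "real n > 0" and xp: "x > 0" using a by auto
  have t1: "t \<ge> 1" unfolding t_def using a xp by simp
  have it: "1/t = x / real n" unfolding t_def by simp
  note g = g_bounds[OF t1]
  have nn: "(real n)^2 * (1/t)^2 = x^2" unfolding it using np by (simp add: power_divide)
  have "B0 n x - 1/2 * real n * x = (real n)^2 * (1 - euler_mascheroni + (harm (nat \<lfloor>t\<rfloor>) - ln t)
      - real (nat \<lfloor>t\<rfloor>) * (1/t) - 1/2 * (1/t))"
    unfolding B0_def Let_def t_def[symmetric] using np xp
    by (simp add: it field_simps power2_eq_square)
  also have "\<bar>\<dots>\<bar> \<le> (real n)^2 * (3 * (1/t)^2)"
    using g(2) by (simp add: abs_mult mult_left_mono)
  also have "\<dots> = 3 * x^2" using nn by simp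
  finally show "\<bar>B0 n x - 1/2 * real n * x\<bar> \<le> 3 * x^2" .
qed

end
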